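(* Let $\Phi:\{0,1\}^n\to\{0,1\}^n$ and $\mu\in\{0,1\}^n$. Then $\overline{W}(\mu)\neq\emptyset$ if and only if $\Phi(\mu)=\mu$; similarly, $\underline{W}(\mu)\neq\emptyset$ if and only if $\Phi(\mu)=\mu$.
   Context: Let $\mathbf{B}=\{0,1\}$ (discrete topology), $n\ge 1$, and $\Phi:\mathbf{B}^n\to\mathbf{B}^n$ a function. For $\nu\in\mathbf{B}^n$ define $\Phi^\nu:\mathbf{B}^n\to\mathbf{B}^n$ coordinatewise by $\Phi^\nu_i(\mu)=\mu_i$ if $\nu_i=0$ and $\Phi^\nu_i(\mu)=\Phi_i(\mu)$ if $\nu_i=1$. For $\alpha^0,\dots,\alpha^k\in\mathbf{B}^n$ put $\Phi^{\alpha^0\dots\alpha^k}=\Phi^{\alpha^k}\circ\cdots\circ\Phi^{\alpha^0}$. A sequence $\alpha=(\alpha^k)_{k\in\mathbf{N}}$ in $\mathbf{B}^n$ is progressive if for every $i\in\{1,\dots,n\}$ the set $\{k:\alpha^k_i=1\}$ is infinite. $Seq$ denotes the set of strictly increasing real sequences $t_0<t_1<\cdots$ unbounded above. $P_n$ is the set of functions $\rho:\mathbf{R}\to\mathbf{B}^n$ of the form $\rho(t_k)=\alpha^k$ for all $k$ and $\rho(t)=0$ for $t\notin\{t_k\}$, where $\alpha$ is progressive and $(t_k)\in Seq$. For such $\rho$ and $\mu\in\mathbf{B}^n$, the orbit is $\Phi^\rho(\mu,t)=\mu$ for $t<t_0$ and $\Phi^\rho(\mu,t)=\Phi^{\alpha^0\dots\alpha^k}(\mu)$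 for $t\in[t_k,t_{k+1})$. The $\omega$-limit set is $\omega_\rho(\mu)=\{\mu'\in\mathbf{B}^n:\exists (s_k)\in Seq$ such that $\Phi^\rho(\mu,s_k)=\mu'$ for all sufficiently large $k\}$. For $\mu\in\mathbf{B}^n$: $\overline{W}(\mu)=\{\mu'\in\mathbf{B}^n:\exists\rho'\in P_n,\ \omega_{\rho'}(\mu')\subset\{\mu\}\}$ and $\underline{W}(\mu)=\{\mu'\in\mathbf{B}^n:\forall\rho'\in P_n,\ \omega_{\rho'}(\mu')\subset\{\mu\}\}$. *)

theory Defs
  imports Complex_Main
begin

text \<open>Boolean vectors in B^n are modelled as functions 'n \<Rightarrow> bool for a finite index
type 'n (so n = CARD('n) \<ge> 1); True stands for 1 and False for 0.\<close>

definition Phi_nu :: "(('n \<Rightarrow> bool) \<Rightarrow> ('n \<Rightarrow> bool)) \<Rightarrow> ('n \<Rightarrow> bool) \<Rightarrow> ('n \<Rightarrow> bool) \<Rightarrow> ('n \<Rightarrow> bool)" where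
  "Phi_nu \<Phi> \<nu> \<mu> = (\<lambda>i. if \<nu> i then \<Phi> \<mu> i else \<mu> i)"

fun Phi_comp :: "(('n \<Rightarrow> bool) \<Rightarrow> ('n \<Rightarrow> bool)) \<Rightarrow> (nat \<Rightarrow> 'n \<Rightarrow> bool) \<Rightarrow> nat \<Rightarrow> ('n \<Rightarrow> bool) \<Rightarrow> ('n \<Rightarrow> bool)" where
  "Phi_comp \<Phi> \<alpha> 0 \<mu> = Phi_nu \<Phi> (\<alpha> 0) \<mu>"
| "Phi_comp \<Phi> \<alpha> (Suc k) \<mu> = Phi_nu \<Phi> (\<alpha> (Suc k)) (Phi_comp \<Phi> \<alpha> k \<mu>)"

definition progressive :: "(nat \<Rightarrow> 'n \<Rightarrow> bool) \<Rightarrow> bool" where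
  "progressive \<alpha> \<longleftrightarrow> (\<forall>i. infinite {k. \<alpha> k i})"

definition Seq :: "(nat \<Rightarrow> real) set" where
  "Seq = {t. strict_mono t \<and> (\<forall>x. \<exists>k. x < t k)}"

definition orbit :: "(('n \<Rightarrow> bool) \<Rightarrow> ('n \<Rightarrow> bool)) \<Rightarrow> (nat \<Rightarrow> 'n \<Rightarrow> bool) \<Rightarrow> (nat \<Rightarrow> real) \<Rightarrow> ('n \<Rightarrow> bool) \<Rightarrow> real \<Rightarrow> ('n \<Rightarrow> bool)" where
  "orbit \<Phi> \<alpha> t \<mu> s = (if s < t 0 then \<mu>
      else Phi_comp \<Phi> \<alpha> (THE k. t k \<le> s \<and> s < t (Suc k)) \<mu>)"

definition omega_lim :: "(('n \<Rightarrow> bool) \<Rightarrow> ('n \<Rightarrow> bool)) \<Rightarrow> (nat \<Rightarrow> 'n \<Rightarrow> bool) \<Rightarrow> (nat \<Rightarrow> real) \<Rightarrow> ('n \<Rightarrow> bool) \<Rightarrow> ('n \<Rightarrow> bool) set" where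
  "omega_lim \<Phi> \<alpha> t \<mu> = {\<mu>'. \<exists>s \<in> Seq. \<exists>K. \<forall>k\<ge>K. orbit \<Phi> \<alpha> t \<mu> (s k) = \<mu>'}"

definition represents :: "(real \<Rightarrow> 'n \<Rightarrow> bool) \<Rightarrow> (nat \<Rightarrow> 'n \<Rightarrow> bool) \<Rightarrow> (nat \<Rightarrow> real) \<Rightarrow> bool" where
  "represents \<rho> \<alpha> t \<longleftrightarrow> progressive \<alpha> \<and> t \<in> Seq \<and> (\<forall>k. \<rho> (t k) = \<alpha> k)
                 \<and> (\<forall>s. s \<notin> range t \<longrightarrow> \<rho> s = (\<lambda>_. False))"

definition P_n :: "(real \<Rightarrow> 'n \<Rightarrow> bool) set" where
  "P_n = {\<rho>. \<exists>\<alpha> t. represents \<rho> \<alpha> t}"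

text \<open>omega_rho(mu), computed from a chosen representation (\<alpha>, t) of rho
(the orbit does not depend on the choice).\<close>
definition omega_rho :: "(('n \<Rightarrow> bool) \<Rightarrow> ('n \<Rightarrow> bool)) \<Rightarrow> (real \<Rightarrow> 'n \<Rightarrow> bool) \<Rightarrow> ('n \<Rightarrow> bool) \<Rightarrow> ('n \<Rightarrow> bool) set" where
  "omega_rho \<Phi> \<rho> \<mu> = (case (SOME p. represents \<rho> (fst p) (snd p)) of (\<alpha>, t) \<Rightarrow> omega_lim \<Phi> \<alpha> t \<mu>)"

definition W_upper :: "(('n \<Rightarrow> bool) \<Rightarrow> ('n \<Rightarrow> bool)) \<Rightarrow> ('n \<Rightarrow> bool) \<Rightarrow> ('n \<Rightarrow> bool) set" where
  "W_upper \<Phi> \<mu> = {\<mu>'. \<exists>\<rho> \<in> P_n. omega_rho \<Phi> \<rho> \<mu>' \<subseteq> {\<mu>}}"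

definition W_lower :: "(('n \<Rightarrow> bool) \<Rightarrow> ('n \<Rightarrow> bool)) \<Rightarrow> ('n \<Rightarrow> bool) \<Rightarrow> ('n \<Rightarrow> bool) set" where
  "W_lower \<Phi> \<mu> = {\<mu>'. \<forall>\<rho> \<in> P_n. omega_rho \<Phi> \<rho> \<mu>' \<subseteq> {\<mu>}}"

end

theory Submission
  imports Defs "HOL-Library.Infinite_Set"
begin

lemma orbit_at:
  assumes "t \<in> Seq"
  shows "orbit \<Phi> \<alpha> t \<mu> (t k) = Phi_comp \<Phi> \<alpha> k \<mu>"
proof -
  have sm: "strict_mono t" using assms by (simp add: Seq_def)
  have "\<not> t k < t 0" using sm by (simp add: strict_mono_less)
  moreover have "(THE k'. t k' \<le> t k \<and> t k < t (Suc k')) = k"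
  proof (rule the_equality)
    show "t k \<le> t k \<and> t k < t (Suc k)" using sm by (simp add: strict_mono_less)
  next
    fix k' assume "t k' \<le> t k \<and> t k < t (Suc k')"
    then have "k' \<le> k" "k < Suc k'" using sm by (auto simp: strict_mono_less_eq strict_mono_less)
    then show "k' = k" by simp
  qed
  ultimately show ?thesis by (simp add: orbit_def)
qed

lemma fixed_comp:
  assumes "\<Phi> \<mu> = \<mu>"
  shows "Phi_comp \<Phi> \<alpha> k \<mu> = \<mu>"
  by (induction k) (auto simp: Phi_nu_def assms)

lemma fixed_omega:
  assumes "\<Phi> \<mu> = \<mu>"
  shows "omega_lim \<Phi> \<alpha> t \<mu> \<subseteq> {\<mu>}"
proof
  fix x assume "x \<in> omega_lim \<Phi> \<alpha> t \<mu>"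
  then have "\<exists>s (K::nat). \<forall>k\<ge>K. orbit \<Phi> \<alpha> t \<mu> (s k) = x" unfolding omega_lim_def by blast
  then obtain s and K::nat where "\<forall>k\<ge>K. orbit \<Phi> \<alpha> t \<mu> (s k) = x" by blast
  then have "orbit \<Phi> \<alpha> t \<mu> (s K) = x" by simp
  moreover have "orbit \<Phi> \<alpha> t \<mu> r = \<mu>" for r
    unfolding orbit_def using fixed_comp[where \<Phi>=\<Phi> and \<mu>=\<mu>, OF assms] by simp
  ultimately show "x \<in> {\<mu>}" by simp
qed

lemma rep_some:
  assumes "\<rho> \<in> P_n"
  obtains \<alpha> t where "represents \<rho> \<alpha> t" "omega_rho \<Phi> \<rho> x = omega_lim \<Phi> \<alpha> t x"
proof -
  have "\<exists>p. represents \<rho> (fst p) (snd p)" using assms by (auto simp: P_n_def)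
  then have "represents \<rho> (fst (SOME p. represents \<rho> (fst p) (snd p))) (snd (SOME p. represents \<rho> (fst p) (snd p)))"
    by (rule someI_ex)
  then show ?thesis using that by (auto simp: omega_rho_def split: prod.splits)
qed

lemma Pn_ne: "(\<lambda>s. if s \<in> range (\<lambda>k::nat. real k) then (\<lambda>_. True) else (\<lambda>_. False)) \<in> (P_n :: (real \<Rightarrow> 'n \<Rightarrow> bool) set)"
proof -
  have "represents (\<lambda>s. if s \<in> range (\<lambda>k::nat. real k) then (\<lambda>_. True) else (\<lambda>_. False) :: 'n \<Rightarrow> bool)
          (\<lambda>k _. True) (\<lambda>k. real k)"
    unfolding represents_def progressive_def Seq_def
    by (auto simp: strict_mono_def intro: reals_Archimedean2)
  then show ?thesis unfolding P_n_def by blast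
qed

lemma main:
  fixes \<Phi> :: "('n::finite \<Rightarrow> bool) \<Rightarrow> ('n \<Rightarrow> bool)"
  assumes prog: "progressive \<alpha>" and tS: "t \<in> Seq" and om: "omega_lim \<Phi> \<alpha> t \<mu>' \<subseteq> {\<mu>}"
  shows "\<Phi> \<mu> = \<mu>"
proof -
  define f where "f k = Phi_comp \<Phi> \<alpha> k \<mu>'" for k
  have sm: "strict_mono t" and ub: "\<forall>x. \<exists>k. x < t k" using tS by (auto simp: Seq_def)
  have fin: "finite {k. f k \<noteq> \<mu>}"
  proof (rule ccontr)
    assume inf: "infinite {k. f k \<noteq> \<mu>}"
    have eq: "{k. f k \<noteq> \<mu>} = (\<Union>\<nu>\<in>UNIV - {\<mu>}. {k. f k = \<nu>})" by auto
    have "\<exists>\<nu>. \<nu> \<noteq> \<mu> \<and> infinite {k. f k = \<nu>}"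
    proof (rule ccontr)
      assume "\<not> ?thesis"
      then have h: "\<And>\<nu>. \<nu> \<in> UNIV - {\<mu>} \<Longrightarrow> finite {k. f k = \<nu>}" by auto
      have "finite (\<Union>\<nu>\<in>UNIV - {\<mu>}. {k. f k = \<nu>})" 
      proof (rule finite_UN_I)
        show "finite (UNIV - {\<mu>})" by (rule finite_Diff[OF finite_UNIV])
      next
        fix \<nu> assume "\<nu> \<in> UNIV - {\<mu>}" then show "finite {k. f k = \<nu>}" by (rule h)
      qed
      then have "finite {k. f k \<noteq> \<mu>}" by (subst eq)
      then show False using inf by contradiction
    qed
    then obtain \<nu> where nu: "\<nu> \<noteq> \<mu>" "infinite {k. f k = \<nu>}" by auto
    define g where "g = Infinite_Set.enumerate {k. f k = \<nu>}"
    have gm: "strict_mono g" using nu(2) by (simp add: g_def strict_mono_enumerate)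
    have gin: "f (g j) = \<nu>" for j using nu(2) enumerate_in_set[OF nu(2)] by (simp add: g_def)
    have sq: "(\<lambda>j. t (g j)) \<in> Seq"
      unfolding Seq_def
    proof (intro CollectI conjI allI)
      show "strict_mono (\<lambda>j. t (g j))" using sm gm by (simp add: strict_mono_def)
    next
      fix x obtain k where "x < t k" using ub by blast
      moreover have "t k \<le> t (g k)" using sm gm by (simp add: strict_mono_less_eq strict_mono_imp_increasing)
      ultimately show "\<exists>k. x < t (g k)" by (meson less_le_trans)
    qed
    have al: "\<forall>k\<ge>0. orbit \<Phi> \<alpha> t \<mu>' (t (g k)) = \<nu>"
    proof (intro allI impI)
      fix k :: nat
      have "orbit \<Phi> \<alpha> t \<mu>' (t (g k)) = f (g k)" unfolding f_def by (rule orbit_at[OF tS])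
      then show "orbit \<Phi> \<alpha> t \<mu>' (t (g k)) = \<nu>" using gin by simp
    qed
    have "\<exists>s\<in>Seq. \<exists>K. \<forall>k\<ge>K. orbit \<Phi> \<alpha> t \<mu>' (s k) = \<nu>"
    proof (rule bexI[OF _ sq])
      show "\<exists>K. \<forall>k\<ge>K. orbit \<Phi> \<alpha> t \<mu>' ((\<lambda>j. t (g j)) k) = \<nu>"
        using al by (intro exI[of _ 0]) simp
    qed
    then have "\<nu> \<in> omega_lim \<Phi> \<alpha> t \<mu>'" unfolding omega_lim_def mem_Collect_eq .
    then show False using om nu(1) by auto
  qed
  then obtain K where K: "\<forall>k\<ge>K. f k = \<mu>"
  proof -
    obtain m where "\<forall>n\<in>{k. f k \<noteq> \<mu>}. n \<le> m" using fin finite_nat_set_iff_bounded_le by blast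
    then have "\<forall>k\<ge>Suc m. f k = \<mu>" by force
    then show ?thesis using that by blast
  qed
  show ?thesis
  proof
    fix i
    have "infinite {k. \<alpha> k i}" using prog by (simp add: progressive_def)
    then obtain k where k: "\<alpha> k i" "k > K"
      unfolding infinite_nat_iff_unbounded by auto
    then obtain m where m: "k = Suc m" "m \<ge> K" by (cases k) auto
    have e: "f (Suc m) = Phi_nu \<Phi> (\<alpha> (Suc m)) (f m)" by (simp add: f_def)
    have a: "f (Suc m) = \<mu>" "f m = \<mu>" using K m by auto
    have "\<mu> = Phi_nu \<Phi> (\<alpha> (Suc m)) \<mu>" using e unfolding a .
    then have "\<mu> i = Phi_nu \<Phi> (\<alpha> (Suc m)) \<mu> i" by (rule fun_cong)
    also have "\<dots> = \<Phi> \<mu> i" using k m by (simp add: Phi_nu_def)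
    finally show "\<Phi> \<mu> i = \<mu> i" by (rule sym)
  qed
qed

theorem theorem40:
  fixes \<Phi> :: "('n::finite \<Rightarrow> bool) \<Rightarrow> ('n \<Rightarrow> bool)" and \<mu> :: "'n \<Rightarrow> bool"
  shows "(W_upper \<Phi> \<mu> \<noteq> {} \<longleftrightarrow> \<Phi> \<mu> = \<mu>) \<and> (W_lower \<Phi> \<mu> \<noteq> {} \<longleftrightarrow> \<Phi> \<mu> = \<mu>)"
proof -
  have up: "\<Phi> \<mu> = \<mu>" if ne: "W_upper \<Phi> \<mu> \<noteq> {}"
  proof -
    obtain x \<rho> where r: "\<rho> \<in> P_n" and o: "omega_rho \<Phi> \<rho> x \<subseteq> {\<mu>}" using ne unfolding W_upper_def by blast
    obtain \<alpha> t where "represents \<rho> \<alpha> t" "omega_rho \<Phi> \<rho> x = omega_lim \<Phi> \<alpha> t x"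
      using rep_some[OF r, of \<Phi> x] by blast
    note rr = this
    from rr(2) o have om: "omega_lim \<Phi> \<alpha> t x \<subseteq> {\<mu>}" by simp
    from rr(1) have "progressive \<alpha>" "t \<in> Seq" unfolding represents_def by auto
    then show ?thesis using om by (rule main)
  qed
  have low: "\<mu> \<in> W_lower \<Phi> \<mu>" if fx: "\<Phi> \<mu> = \<mu>"
    unfolding W_lower_def
  proof (intro CollectI ballI)
    fix \<rho> :: "real \<Rightarrow> 'n \<Rightarrow> bool" assume r: "\<rho> \<in> P_n"
    obtain \<alpha> t where "omega_rho \<Phi> \<rho> \<mu> = omega_lim \<Phi> \<alpha> t \<mu>"
      using rep_some[OF r, of \<Phi> \<mu>] by blast
    then show "omega_rho \<Phi> \<rho> \<mu> \<subseteq> {\<mu>}" using fixed_omega[where \<Phi>=\<Phi> and \<mu>=\<mu>, OF fx] by simp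
  qed
  have sub: "x \<in> W_upper \<Phi> \<mu>" if xl: "x \<in> W_lower \<Phi> \<mu>" for x
  proof -
    have "omega_rho \<Phi> (\<lambda>s. if s \<in> range (\<lambda>k::nat. real k) then (\<lambda>_. True) else (\<lambda>_. False)) x \<subseteq> {\<mu>}"
      using xl Pn_ne unfolding W_lower_def by blast
    then show ?thesis using Pn_ne unfolding W_upper_def by blast
  qed
  have lowr: "\<Phi> \<mu> = \<mu>" if ne: "W_lower \<Phi> \<mu> \<noteq> {}"
  proof -
    obtain x where "x \<in> W_lower \<Phi> \<mu>" using ne by blast
    then have "x \<in> W_upper \<Phi> \<mu>" by (rule sub)
    then have "W_upper \<Phi> \<mu> \<noteq> {}" by auto
    then show ?thesis by (rule up)
  qed
  have upr: "W_upper \<Phi> \<mu> \<noteq> {}" if fx: "\<Phi> \<mu> = \<mu>"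
  proof
    assume "W_upper \<Phi> \<mu> = {}" then show False using sub[OF low[OF fx]] by simp
  qed
  have lowl: "W_lower \<Phi> \<mu> \<noteq> {}" if fx: "\<Phi> \<mu> = \<mu>"
  proof
    assume "W_lower \<Phi> \<mu> = {}" then show False using low[OF fx] by simp
  qed
  show ?thesis
  proof (intro conjI iffI)
    show "\<Phi> \<mu> = \<mu>" if "W_upper \<Phi> \<mu> \<noteq> {}" using that by (rule up)
    show "W_upper \<Phi> \<mu> \<noteq> {}" if "\<Phi> \<mu> = \<mu>" using that by (rule upr)
    show "\<Phi> \<mu> = \<mu>" if "W_lower \<Phi> \<mu> \<noteq> {}" using that by (rule lowr)
    show "W_lower \<Phi> \<mu> \<noteq> {}" if "\<Phi> \<mu> = \<mu>" using that by (rule lowl)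
  qed
qed

end
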